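(* Let $1/3<\kappa<\gamma<1/2$, assume hypothesis (H), let $I=[a,b]\subset[0,T]$, $\varepsilon=b-a$, $a_0\in\mathbb R^k$, $\tilde h\in\mathcal L_1(\mathbb R^k)$, and let $\tilde y\in\tilde{\mathcal Q}^\kappa_{\tilde h}(I;\mathbb R^k)$ with decomposition $\tilde\delta\tilde y=(\tilde x^1\zeta^{\tilde y})^*+\tilde r^{\tilde y}$. Set $y=a_0+\int_0^\infty\hat\phi(\xi)\tilde y(\xi)d\xi$. Then $y\in\mathcal A^\kappa_{f,h}(I;\mathbb R^k)$ with $$f_{ts}=\int_0^\infty\hat\phi(\xi)\,(e^{-\xi(t-s)}-1)e^{-\xi(s-a)}\tilde h(\xi)\,d\xi,\qquad h=a_0+\int_0^\infty\hat\phi(\xi)\tilde h(\xi)d\xi,$$ and $\mathcal M[y;\mathcal A^\kappa_{f,h}(I)]\le c_x\{\mathcal N[\tilde y;\tilde{\mathcal Q}^\kappa(I)]+\varepsilon^{1-\kappa}\mathcal N[\tilde h;\mathcal L_1]\}$.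
   Context: Measurable $\hat\phi:(0,\infty)\to\mathbb R$ and $T>0$ fixed. $\mathcal L_1(V)$: measurable $g:[0,\infty)\to V$ with $\mathcal N[g;\mathcal L_1]=\int_0^\infty|\hat\phi(\xi)|(1+\xi)\|g(\xi)\|d\xi<\infty$. $\tilde{\mathcal C}_k(I;V)$: continuous maps from $\{t_1\ge\dots\ge t_k\}\subset I^k$ to $\mathcal L_1(V)$. $(\tilde\delta f)_{ts}(\xi)=f_t(\xi)-e^{-\xi(t-s)}f_s(\xi)$, $(\tilde\delta B)_{tus}(\xi)=B_{ts}-B_{tu}-e^{-\xi(t-u)}B_{us}$. $\mathcal N[B;\tilde{\mathcal C}^\mu_2]=\sup_{s<t}\mathcal N[B_{ts};\mathcal L_1]/|t-s|^\mu$, $\mathcal N[f;\tilde{\mathcal C}^\mu_1]=\mathcal N[\tilde\delta f;\tilde{\mathcal C}^\mu_2]$; $\mathcal N[h;\tilde{\mathcal C}^\mu_3]=\inf\sum_i\sup_{s<u<t}\mathcal N[h^i_{tus};\mathcal L_1]|t-u|^{-\rho_i}|u-s|^{-(\mu-\rho_i)}$ over $h=\sum_ih^i$, $\rho_i\in(0,\mu)$. Paths: $\mathcal N[z;\mathcal C_1^0]=\sup\|z_s\|$, $\mathcal N[z;\mathcal C_1^\mu]=\sup_{s\ne t}\|z_t-z_s\|/|t-s|^\mu$, $\mathcal N[r;\mathcal C_2^\mu]=\sup_{s\ne t}\|r_{ts}\|/|t-s|^\mu$. Hypothesis (H): $\tilde x^1\in\tilde{\mathcal C}_2^\gamma([0,T];\mathbb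 R^{1,n})$, $\tilde x^2\in\tilde{\mathcal C}_2^{2\gamma}([0,T];\mathbb R^{n,n})$, $\tilde x^3\in\tilde{\mathcal C}_3^{3\gamma}([0,T];\mathbb R^{n,n})$, $\tilde\delta\tilde x^1=0$, $(\tilde\delta\tilde x^2)_{tus}=\tilde x^1_{tu}\otimes x^1_{us}+\tilde x^3_{tus}$ with $x^1_{ts}=\int_0^\infty\tilde x^1_{ts}(\xi)\hat\phi(\xi)d\xi$ and $(u\otimes v)_{ij}=u_iv_j$. $\tilde{\mathcal Q}^\kappa_{\tilde h}(I;\mathbb R^k)$: $\tilde y\in\tilde{\mathcal C}_1(I;\mathbb R^k)$ with $\tilde y_a=\tilde h$ and $(\tilde\delta\tilde y)_{ts}=(\tilde x^1_{ts}\zeta_s)^*+\tilde r_{ts}$, $\zeta\in\mathcal C_1^\kappa(I;\mathbb R^{n,k})$, $\tilde r\in\tilde{\mathcal C}^{2\kappa}_2$; $\mathcal N[\tilde y;\tilde{\mathcal Q}^\kappa]=\mathcal N[\tilde y;\tilde{\mathcal C}^\kappa_1]+\mathcal N[\zeta;\mathcal C_1^0]+\mathcal N[\zeta;\mathcal C_1^\kappa]+\mathcal N[\tilde r;\tilde{\mathcal C}^{2\kappa}_2]$. $\mathcal A^\kappa_{f,h}(I;\mathbb R^k)$ for $f$ with $\mathcal N[f;\mathcal C^1_2]<\infty$ and $h\in\mathbb R^k$: $\gamma$-Hölder paths $y$ with $y_a=h$ and $(\delta y)_{ts}-f_{ts}=(x^1_{ts}\zeta^y_s)^*+r^y_{ts}$,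 $\zeta^y\in\mathcal C_1^\kappa(I;\mathbb R^{n,k})$, $r^y\in\mathcal C_2^{2\kappa}(I;\mathbb R^k)$; $\mathcal M[y;\mathcal A^\kappa_{f,h}]=\mathcal N[\zeta^y;\mathcal C_1^0]+\mathcal N[\zeta^y;\mathcal C_1^\kappa]+\mathcal N[r^y;\mathcal C_2^{2\kappa}]+\mathcal N[y;\mathcal C_1^\kappa]$. *)

theory Defs
  imports "HOL-Analysis.Analysis"
begin

definition L1_nn :: "(real \<Rightarrow> real) \<Rightarrow> (real \<Rightarrow> 'v::real_normed_vector) \<Rightarrow> ennreal" where
  "L1_nn \<phi> g = (\<integral>\<^sup>+ \<xi>. indicator {0<..} \<xi> * ennreal (\<bar>\<phi> \<xi>\<bar> * (1 + \<xi>) * norm (g \<xi>)) \<partial>lborel)"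

definition isL1 :: "(real \<Rightarrow> real) \<Rightarrow> (real \<Rightarrow> 'v::real_normed_vector) \<Rightarrow> bool" where
  "isL1 \<phi> g \<longleftrightarrow> set_borel_measurable lborel {0..} g \<and> L1_nn \<phi> g < \<infinity>"

definition L1norm :: "(real \<Rightarrow> real) \<Rightarrow> (real \<Rightarrow> 'v::real_normed_vector) \<Rightarrow> real" where
  "L1norm \<phi> g = enn2real (L1_nn \<phi> g)"

definition phint :: "(real \<Rightarrow> real) \<Rightarrow> (real \<Rightarrow> 'v::{banach,second_countable_topology}) \<Rightarrow> 'v" where
  "phint \<phi> g = (LINT \<xi>:{0<..}|lborel. \<phi> \<xi> *\<^sub>R g \<xi>)"

definition simplex2 :: "real \<Rightarrow> real \<Rightarrow> (real \<times> real) set" where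
  "simplex2 a b = {(t,s). a \<le> s \<and> s \<le> t \<and> t \<le> b}"

definition simplex3 :: "real \<Rightarrow> real \<Rightarrow> (real \<times> real \<times> real) set" where
  "simplex3 a b = {(t,u,s). a \<le> s \<and> s \<le> u \<and> u \<le> t \<and> t \<le> b}"

definition L1_cont :: "(real \<Rightarrow> real) \<Rightarrow> 'a::metric_space set \<Rightarrow> ('a \<Rightarrow> real \<Rightarrow> 'v::real_normed_vector) \<Rightarrow> bool" where
  "L1_cont \<phi> S F \<longleftrightarrow> (\<forall>p\<in>S. isL1 \<phi> (F p)) \<and>
     (\<forall>p\<in>S. \<forall>e>0. \<exists>d>0. \<forall>q\<in>S. dist q p < d \<longrightarrow> L1norm \<phi> (\<lambda>\<xi>. F q \<xi> - F p \<xi>) < e)"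

definition tC1 :: "(real \<Rightarrow> real) \<Rightarrow> real \<Rightarrow> real \<Rightarrow> (real \<Rightarrow> real \<Rightarrow> 'v::real_normed_vector) \<Rightarrow> bool" where
  "tC1 \<phi> a b f \<longleftrightarrow> L1_cont \<phi> {a..b} f"

definition tC2 :: "(real \<Rightarrow> real) \<Rightarrow> real \<Rightarrow> real \<Rightarrow> (real \<Rightarrow> real \<Rightarrow> real \<Rightarrow> 'v::real_normed_vector) \<Rightarrow> bool" where
  "tC2 \<phi> a b B \<longleftrightarrow> L1_cont \<phi> (simplex2 a b) (\<lambda>(t,s). B t s)"

definition tC3 :: "(real \<Rightarrow> real) \<Rightarrow> real \<Rightarrow> real \<Rightarrow> (real \<Rightarrow> real \<Rightarrow> real \<Rightarrow> real \<Rightarrow> 'v::real_normed_vector) \<Rightarrow> bool" where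
  "tC3 \<phi> a b H \<longleftrightarrow> L1_cont \<phi> (simplex3 a b) (\<lambda>(t,u,s). H t u s)"

definition tdelta1 :: "(real \<Rightarrow> real \<Rightarrow> 'v::real_vector) \<Rightarrow> real \<Rightarrow> real \<Rightarrow> real \<Rightarrow> 'v" where
  "tdelta1 f t s = (\<lambda>\<xi>. f t \<xi> - exp (- \<xi> * (t - s)) *\<^sub>R f s \<xi>)"

definition tdelta2 :: "(real \<Rightarrow> real \<Rightarrow> real \<Rightarrow> 'v::real_vector) \<Rightarrow> real \<Rightarrow> real \<Rightarrow> real \<Rightarrow> real \<Rightarrow> 'v" where
  "tdelta2 B t u s = (\<lambda>\<xi>. B t s \<xi> - B t u \<xi> - exp (- \<xi> * (t - u)) *\<^sub>R B u s \<xi>)"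

definition offdiag2 :: "real \<Rightarrow> real \<Rightarrow> (real \<times> real) set" where
  "offdiag2 a b = {(t,s). a \<le> s \<and> s < t \<and> t \<le> b}"

definition tquot2 :: "(real \<Rightarrow> real) \<Rightarrow> real \<Rightarrow> (real \<Rightarrow> real \<Rightarrow> real \<Rightarrow> 'v::real_normed_vector) \<Rightarrow> real \<times> real \<Rightarrow> real" where
  "tquot2 \<phi> \<mu> B = (\<lambda>(t,s). L1norm \<phi> (B t s) / (t - s) powr \<mu>)"

definition tnorm2 :: "(real \<Rightarrow> real) \<Rightarrow> real \<Rightarrow> real \<Rightarrow> real \<Rightarrow> (real \<Rightarrow> real \<Rightarrow> real \<Rightarrow> 'v::real_normed_vector) \<Rightarrow> real" where
  "tnorm2 \<phi> \<mu> a b B = (SUP p \<in> offdiag2 a b. tquot2 \<phi> \<mu> B p)"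

definition tC2mu :: "(real \<Rightarrow> real) \<Rightarrow> real \<Rightarrow> real \<Rightarrow> real \<Rightarrow> (real \<Rightarrow> real \<Rightarrow> real \<Rightarrow> 'v::real_normed_vector) \<Rightarrow> bool" where
  "tC2mu \<phi> \<mu> a b B \<longleftrightarrow> tC2 \<phi> a b B \<and> bdd_above (tquot2 \<phi> \<mu> B ` offdiag2 a b)"

definition tnorm1 :: "(real \<Rightarrow> real) \<Rightarrow> real \<Rightarrow> real \<Rightarrow> real \<Rightarrow> (real \<Rightarrow> real \<Rightarrow> 'v::real_normed_vector) \<Rightarrow> real" where
  "tnorm1 \<phi> \<mu> a b f = tnorm2 \<phi> \<mu> a b (tdelta1 f)"

text \<open>H in C~^mu_3(I;V): continuous, and admitting a finite decomposition H = sum_i H^i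
  with rho_i in (0,mu) such that each weighted sup is finite (i.e. the infimum defining
  N[H; C~^mu_3] is finite).\<close>
definition tC3mu :: "(real \<Rightarrow> real) \<Rightarrow> real \<Rightarrow> real \<Rightarrow> real \<Rightarrow> (real \<Rightarrow> real \<Rightarrow> real \<Rightarrow> real \<Rightarrow> 'v::real_normed_vector) \<Rightarrow> bool" where
  "tC3mu \<phi> \<mu> a b H \<longleftrightarrow> tC3 \<phi> a b H \<and>
     (\<exists>(hs :: (real \<Rightarrow> real \<Rightarrow> real \<Rightarrow> real \<Rightarrow> 'v) list) (\<rho>s :: real list).
        length hs = length \<rho>s \<and>
        (\<forall>i < length hs. 0 < \<rho>s ! i \<and> \<rho>s ! i < \<mu> \<and>
            (\<forall>(t,u,s) \<in> simplex3 a b. isL1 \<phi> ((hs ! i) t u s)) \<and>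
            (\<exists>C. \<forall>t u s. a \<le> s \<and> s < u \<and> u < t \<and> t \<le> b \<longrightarrow>
                 L1norm \<phi> ((hs ! i) t u s) \<le> C * (t - u) powr (\<rho>s ! i) * (u - s) powr (\<mu> - \<rho>s ! i))) \<and>
        (\<forall>(t,u,s) \<in> simplex3 a b. \<forall>\<xi>\<ge>0. H t u s \<xi> = (\<Sum>i<length hs. (hs ! i) t u s \<xi>)))"

definition pnorm0 :: "real \<Rightarrow> real \<Rightarrow> (real \<Rightarrow> 'v::real_normed_vector) \<Rightarrow> real" where
  "pnorm0 a b z = (SUP s \<in> {a..b}. norm (z s))"

definition pquot1 :: "real \<Rightarrow> (real \<Rightarrow> 'v::real_normed_vector) \<Rightarrow> real \<times> real \<Rightarrow> real" where
  "pquot1 \<mu> z = (\<lambda>(t,s). norm (z t - z s) / \<bar>t - s\<bar> powr \<mu>)"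

definition pairs_ne :: "real \<Rightarrow> real \<Rightarrow> (real \<times> real) set" where
  "pairs_ne a b = {(t,s). t \<in> {a..b} \<and> s \<in> {a..b} \<and> s \<noteq> t}"

definition pholder :: "real \<Rightarrow> real \<Rightarrow> real \<Rightarrow> (real \<Rightarrow> 'v::real_normed_vector) \<Rightarrow> bool" where
  "pholder \<mu> a b z \<longleftrightarrow> bdd_above (pquot1 \<mu> z ` pairs_ne a b)"

definition pnorm1 :: "real \<Rightarrow> real \<Rightarrow> real \<Rightarrow> (real \<Rightarrow> 'v::real_normed_vector) \<Rightarrow> real" where
  "pnorm1 \<mu> a b z = (SUP p \<in> pairs_ne a b. pquot1 \<mu> z p)"

text \<open>Two-parameter paths r_ts, considered for s < t (they are only defined on the simplex).\<close>
definition pquot2 :: "real \<Rightarrow> (real \<Rightarrow> real \<Rightarrow> 'v::real_normed_vector) \<Rightarrow> real \<times> real \<Rightarrow> real" where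
  "pquot2 \<mu> r = (\<lambda>(t,s). norm (r t s) / \<bar>t - s\<bar> powr \<mu>)"

definition pC2 :: "real \<Rightarrow> real \<Rightarrow> real \<Rightarrow> (real \<Rightarrow> real \<Rightarrow> 'v::real_normed_vector) \<Rightarrow> bool" where
  "pC2 \<mu> a b r \<longleftrightarrow> bdd_above (pquot2 \<mu> r ` offdiag2 a b)"

definition pnorm2 :: "real \<Rightarrow> real \<Rightarrow> real \<Rightarrow> (real \<Rightarrow> real \<Rightarrow> 'v::real_normed_vector) \<Rightarrow> real" where
  "pnorm2 \<mu> a b r = (SUP p \<in> offdiag2 a b. pquot2 \<mu> r p)"

definition tensor :: "real ^ 'n \<Rightarrow> real ^ 'n \<Rightarrow> real ^ 'n ^ 'n" where
  "tensor u v = (\<chi> i j. u $ i * v $ j)"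

definition xint :: "(real \<Rightarrow> real) \<Rightarrow> (real \<Rightarrow> real \<Rightarrow> real \<Rightarrow> real ^ 'n) \<Rightarrow> real \<Rightarrow> real \<Rightarrow> real ^ 'n" where
  "xint \<phi> x1t t s = phint \<phi> (x1t t s)"

definition hypH :: "(real \<Rightarrow> real) \<Rightarrow> real \<Rightarrow> real \<Rightarrow> (real \<Rightarrow> real \<Rightarrow> real \<Rightarrow> real ^ 'n)
     \<Rightarrow> (real \<Rightarrow> real \<Rightarrow> real \<Rightarrow> real ^ 'n ^ 'n) \<Rightarrow> (real \<Rightarrow> real \<Rightarrow> real \<Rightarrow> real \<Rightarrow> real ^ 'n ^ 'n) \<Rightarrow> bool" where
  "hypH \<phi> \<gamma> T x1t x2t x3t \<longleftrightarrow>
     tC2mu \<phi> \<gamma> 0 T x1t \<and> tC2mu \<phi> (2 * \<gamma>) 0 T x2t \<and> tC3mu \<phi> (3 * \<gamma>) 0 T x3t \<and>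
     (\<forall>(t,u,s) \<in> simplex3 0 T. \<forall>\<xi>\<ge>0. tdelta2 x1t t u s \<xi> = 0) \<and>
     (\<forall>(t,u,s) \<in> simplex3 0 T. \<forall>\<xi>\<ge>0.
        tdelta2 x2t t u s \<xi> = tensor (x1t t u \<xi>) (xint \<phi> x1t u s) + x3t t u s \<xi>)"

text \<open>y~ in Q~^kappa_{h~}(I;R^k) with decomposition (zeta, r~).  Row vector times matrix,
  then transposed, is rendered as  x v* zeta.\<close>
definition tQ :: "(real \<Rightarrow> real) \<Rightarrow> real \<Rightarrow> (real \<Rightarrow> real \<Rightarrow> real \<Rightarrow> real ^ 'n) \<Rightarrow> real \<Rightarrow> real
     \<Rightarrow> (real \<Rightarrow> real ^ 'k) \<Rightarrow> (real \<Rightarrow> real \<Rightarrow> real ^ 'k) \<Rightarrow> (real \<Rightarrow> real ^ 'k ^ 'n)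
     \<Rightarrow> (real \<Rightarrow> real \<Rightarrow> real \<Rightarrow> real ^ 'k) \<Rightarrow> bool" where
  "tQ \<phi> \<kappa> x1t a b h yt \<zeta> rt \<longleftrightarrow>
     tC1 \<phi> a b yt \<and> (\<forall>\<xi>\<ge>0. yt a \<xi> = h \<xi>) \<and>
     (\<forall>(t,s) \<in> simplex2 a b. \<forall>\<xi>\<ge>0. tdelta1 yt t s \<xi> = x1t t s \<xi> v* \<zeta> s + rt t s \<xi>) \<and>
     pholder \<kappa> a b \<zeta> \<and> tC2mu \<phi> (2 * \<kappa>) a b rt"

definition tQnorm :: "(real \<Rightarrow> real) \<Rightarrow> real \<Rightarrow> real \<Rightarrow> real
     \<Rightarrow> (real \<Rightarrow> real \<Rightarrow> real ^ 'k) \<Rightarrow> (real \<Rightarrow> real ^ 'k ^ 'n)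
     \<Rightarrow> (real \<Rightarrow> real \<Rightarrow> real \<Rightarrow> real ^ 'k) \<Rightarrow> real" where
  "tQnorm \<phi> \<kappa> a b yt \<zeta> rt =
     tnorm1 \<phi> \<kappa> a b yt + pnorm0 a b \<zeta> + pnorm1 \<kappa> a b \<zeta> + tnorm2 \<phi> (2 * \<kappa>) a b rt"

text \<open>y in A^kappa_{f,h}(I;R^k) with decomposition (zeta^y, r^y); includes the standing
  requirement N[f; C^1_2] < infinity.\<close>
definition inA :: "real \<Rightarrow> real \<Rightarrow> (real \<Rightarrow> real \<Rightarrow> real ^ 'n) \<Rightarrow> real \<Rightarrow> real
     \<Rightarrow> (real \<Rightarrow> real \<Rightarrow> real ^ 'k) \<Rightarrow> real ^ 'k \<Rightarrow> (real \<Rightarrow> real ^ 'k)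
     \<Rightarrow> (real \<Rightarrow> real ^ 'k ^ 'n) \<Rightarrow> (real \<Rightarrow> real \<Rightarrow> real ^ 'k) \<Rightarrow> bool" where
  "inA \<kappa> \<gamma> x1 a b f h y \<zeta>y ry \<longleftrightarrow>
     pC2 1 a b f \<and> pholder \<gamma> a b y \<and> y a = h \<and>
     (\<forall>(t,s) \<in> simplex2 a b. y t - y s - f t s = x1 t s v* \<zeta>y s + ry t s) \<and>
     pholder \<kappa> a b \<zeta>y \<and> pC2 (2 * \<kappa>) a b ry"

definition Mnorm :: "real \<Rightarrow> real \<Rightarrow> real \<Rightarrow> (real \<Rightarrow> real ^ 'k)
     \<Rightarrow> (real \<Rightarrow> real ^ 'k ^ 'n) \<Rightarrow> (real \<Rightarrow> real \<Rightarrow> real ^ 'k) \<Rightarrow> real" where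
  "Mnorm \<kappa> a b y \<zeta>y ry = pnorm0 a b \<zeta>y + pnorm1 \<kappa> a b \<zeta>y + pnorm2 (2 * \<kappa>) a b ry + pnorm1 \<kappa> a b y"

end

theory Submission
  imports Defs
begin


lemma vm_blin: "bounded_linear (\<lambda>x::real^'n. x v* (M::real^'k^'n))"
proof -
  have "(\<lambda>x::real^'n. x v* M) = (*v) (transpose M)" by (rule ext) simp
  then show ?thesis by simp
qed

lemma vm_norm:
  fixes x :: "real^'n" and M :: "real^'k^'n"
  shows "norm (x v* M) \<le> (real CARD('k) * real CARD('n)) * norm M * norm x"
proof -
  have "norm (x v* M) \<le> onorm ((*v) (transpose M)) * norm x"
    using onorm[OF matrix_vector_mul_bounded_linear[of "transpose M"], of x] by simp
  moreover have "onorm ((*v) (transpose M)) \<le> real CARD('k) * real CARD('n) * norm M"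
  proof (rule onorm_le_matrix_component)
    fix i j
    have "\<bar>transpose M $ i $ j\<bar> = \<bar>M $ j $ i\<bar>" by (simp add: transpose_def)
    also have "\<dots> \<le> norm (M $ j)" by (rule component_le_norm_cart)
    also have "\<dots> \<le> norm M" by (rule Finite_Cartesian_Product.norm_nth_le)
    finally show "\<bar>transpose M $ i $ j\<bar> \<le> norm M" .
  qed
  ultimately show ?thesis
    by (metis (no_types, lifting) mult_right_mono norm_ge_zero order_trans)
qed



lemma W_eq:
  "indicator {0<..} \<xi> * ennreal (\<bar>\<phi> \<xi>\<bar> * (1 + \<xi>) * norm (g \<xi>)) =
   ennreal (\<bar>indicator {0<..} \<xi> *\<^sub>R \<phi> \<xi>\<bar> * (1 + \<xi>) * norm (indicator {0..} \<xi> *\<^sub>R g \<xi>))"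
  for \<xi> :: real and g :: "real \<Rightarrow> 'v::real_normed_vector"
  by (cases "\<xi> > 0") (auto simp: indicator_def)

lemma W_meas:
  fixes g :: "real \<Rightarrow> 'v::{banach,second_countable_topology}"
  assumes phim: "set_borel_measurable lborel {0<..} \<phi>"
    and gm: "set_borel_measurable lborel {0..} g"
  shows "(\<lambda>\<xi>. indicator {0<..} \<xi> * ennreal (\<bar>\<phi> \<xi>\<bar> * (1 + \<xi>) * norm (g \<xi>))) \<in> borel_measurable lborel"
proof -
  have [measurable]: "(\<lambda>x. indicator {0<..} x *\<^sub>R \<phi> x) \<in> borel_measurable lborel"
    using phim by (simp add: set_borel_measurable_def)
  have [measurable]: "(\<lambda>x. indicator {0..} x *\<^sub>R g x) \<in> borel_measurable lborel"
    using gm by (simp add: set_borel_measurable_def)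
  show ?thesis unfolding W_eq by measurable
qed

lemma L1nn_fin: "isL1 \<phi> g \<Longrightarrow> L1_nn \<phi> g = ennreal (L1norm \<phi> g)"
  unfolding isL1_def L1norm_def by (simp add: ennreal_enn2real_if less_top)

lemma L1norm_nonneg: "0 \<le> L1norm \<phi> g"
  unfolding L1norm_def by simp

lemma phint_weighted:
  fixes g :: "real \<Rightarrow> 'v::{banach,second_countable_topology}"
  assumes phim: "set_borel_measurable lborel {0<..} \<phi>"
    and gL: "isL1 \<phi> g"
    and cm: "c \<in> borel_measurable lborel"
    and cb: "\<And>\<xi>. \<xi> > 0 \<Longrightarrow> \<bar>c \<xi>\<bar> \<le> K * (1 + \<xi>)"
  shows "set_integrable lborel {0<..} (\<lambda>\<xi>. \<phi> \<xi> *\<^sub>R (c \<xi> *\<^sub>R g \<xi>))"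
    and "norm (phint \<phi> (\<lambda>\<xi>. c \<xi> *\<^sub>R g \<xi>)) \<le> K * L1norm \<phi> g"
proof -
  have K0: "0 \<le> K" using cb[of 1] by simp
  have [measurable]: "(\<lambda>x. indicator {0<..} x *\<^sub>R \<phi> x) \<in> borel_measurable lborel"
    using phim by (simp add: set_borel_measurable_def)
  have [measurable]: "(\<lambda>x. indicator {0..} x *\<^sub>R g x) \<in> borel_measurable lborel"
    using gL by (simp add: set_borel_measurable_def isL1_def)
  have [measurable]: "c \<in> borel_measurable lborel" by fact
  define F where "F = (\<lambda>\<xi>. indicator {0<..} \<xi> *\<^sub>R (\<phi> \<xi> *\<^sub>R (c \<xi> *\<^sub>R g \<xi>)))"
  have Feq: "F = (\<lambda>\<xi>. (indicator {0<..} \<xi> *\<^sub>R \<phi> \<xi>) *\<^sub>R (c \<xi> *\<^sub>R (indicator {0..} \<xi> *\<^sub>R g \<xi>)))"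
    unfolding F_def by (rule ext) (auto simp: indicator_def)
  have Fm: "F \<in> borel_measurable lborel" unfolding Feq by measurable
  have Wm: "(\<lambda>\<xi>. indicator {0<..} \<xi> * ennreal (\<bar>\<phi> \<xi>\<bar> * (1 + \<xi>) * norm (g \<xi>))) \<in> borel_measurable lborel"
    using W_meas[OF phim, of g] gL unfolding isL1_def by blast
  have "(\<integral>\<^sup>+\<xi>. ennreal (norm (F \<xi>)) \<partial>lborel) \<le>
        (\<integral>\<^sup>+\<xi>. ennreal K * (indicator {0<..} \<xi> * ennreal (\<bar>\<phi> \<xi>\<bar> * (1 + \<xi>) * norm (g \<xi>))) \<partial>lborel)"
  proof (rule nn_integral_mono)
    fix \<xi> :: real
    show "ennreal (norm (F \<xi>)) \<le> ennreal K * (indicator {0<..} \<xi> * ennreal (\<bar>\<phi> \<xi>\<bar> * (1 + \<xi>) * norm (g \<xi>)))"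
    proof (cases "\<xi> > 0")
      case True
      have "norm (F \<xi>) = \<bar>\<phi> \<xi>\<bar> * \<bar>c \<xi>\<bar> * norm (g \<xi>)" using True by (simp add: F_def abs_mult)
      also have "\<dots> \<le> \<bar>\<phi> \<xi>\<bar> * (K * (1 + \<xi>)) * norm (g \<xi>)"
        by (intro mult_right_mono mult_left_mono cb True) auto
      finally have "norm (F \<xi>) \<le> K * (\<bar>\<phi> \<xi>\<bar> * (1 + \<xi>) * norm (g \<xi>))" by (simp add: algebra_simps)
      then show ?thesis using True K0 by (simp add: ennreal_mult[symmetric])
    next
      case False then show ?thesis by (simp add: F_def)
    qed
  qed
  also have "\<dots> = ennreal K * L1_nn \<phi> g"
    unfolding L1_nn_def by (rule nn_integral_cmult[OF Wm])
  also have "\<dots> = ennreal (K * L1norm \<phi> g)"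
    using L1nn_fin[OF gL] K0 L1norm_nonneg[of \<phi> g] by (simp add: ennreal_mult)
  finally have nb: "(\<integral>\<^sup>+\<xi>. ennreal (norm (F \<xi>)) \<partial>lborel) \<le> ennreal (K * L1norm \<phi> g)" .
  have "(\<integral>\<^sup>+\<xi>. ennreal (norm (F \<xi>)) \<partial>lborel) < \<infinity>"
    using le_less_trans[OF nb ennreal_less_top[of "K * L1norm \<phi> g"]] by simp
  then have Fi: "integrable lborel F"
    by (rule integrableI_bounded[OF Fm])
  then show "set_integrable lborel {0<..} (\<lambda>\<xi>. \<phi> \<xi> *\<^sub>R (c \<xi> *\<^sub>R g \<xi>))"
    by (simp add: set_integrable_def F_def)
  have "phint \<phi> (\<lambda>\<xi>. c \<xi> *\<^sub>R g \<xi>) = integral\<^sup>L lborel F"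
    by (simp add: phint_def set_lebesgue_integral_def F_def)
  then have "ennreal (norm (phint \<phi> (\<lambda>\<xi>. c \<xi> *\<^sub>R g \<xi>))) \<le> ennreal (K * L1norm \<phi> g)"
    using integral_norm_bound_ennreal[OF Fi] nb by (metis order_trans)
  then show "norm (phint \<phi> (\<lambda>\<xi>. c \<xi> *\<^sub>R g \<xi>)) \<le> K * L1norm \<phi> g"
    using K0 L1norm_nonneg[of \<phi> g] ennreal_le_iff[of "K * L1norm \<phi> g"] by simp
qed

lemma phint_L1:
  fixes g :: "real \<Rightarrow> 'v::{banach,second_countable_topology}"
  assumes phim: "set_borel_measurable lborel {0<..} \<phi>" and gL: "isL1 \<phi> g"
  shows "set_integrable lborel {0<..} (\<lambda>\<xi>. \<phi> \<xi> *\<^sub>R g \<xi>)"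
    and "norm (phint \<phi> g) \<le> L1norm \<phi> g"
  using phint_weighted[OF phim gL, of "\<lambda>_. 1" 1] by auto

lemma L1_bound2:
  fixes g :: "real \<Rightarrow> 'v::{banach,second_countable_topology}"
    and h1 :: "real \<Rightarrow> 'w::{banach,second_countable_topology}"
    and h2 :: "real \<Rightarrow> 'u::{banach,second_countable_topology}"
  assumes phim: "set_borel_measurable lborel {0<..} \<phi>"
    and h1: "isL1 \<phi> h1" and h2: "isL1 \<phi> h2"
    and gm: "set_borel_measurable lborel {0..} g"
    and K1: "0 \<le> K1" and K2: "0 \<le> K2"
    and b: "\<And>\<xi>. \<xi> > 0 \<Longrightarrow> norm (g \<xi>) \<le> K1 * norm (h1 \<xi>) + K2 * norm (h2 \<xi>)"
  shows "isL1 \<phi> g" and "L1norm \<phi> g \<le> K1 * L1norm \<phi> h1 + K2 * L1norm \<phi> h2"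
proof -
  define W1 where "W1 = (\<lambda>\<xi>. indicator {0<..} \<xi> * ennreal (\<bar>\<phi> \<xi>\<bar> * (1 + \<xi>) * norm (h1 \<xi>)))"
  define W2 where "W2 = (\<lambda>\<xi>. indicator {0<..} \<xi> * ennreal (\<bar>\<phi> \<xi>\<bar> * (1 + \<xi>) * norm (h2 \<xi>)))"
  have W1: "W1 \<in> borel_measurable lborel" using W_meas[OF phim, of h1] h1 unfolding isL1_def W1_def by blast
  have W2: "W2 \<in> borel_measurable lborel" using W_meas[OF phim, of h2] h2 unfolding isL1_def W2_def by blast
  have "L1_nn \<phi> g \<le> (\<integral>\<^sup>+\<xi>. ennreal K1 * W1 \<xi> + ennreal K2 * W2 \<xi> \<partial>lborel)"
    unfolding L1_nn_def
  proof (rule nn_integral_mono)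
    fix \<xi> :: real
    show "indicator {0<..} \<xi> * ennreal (\<bar>\<phi> \<xi>\<bar> * (1 + \<xi>) * norm (g \<xi>)) \<le> ennreal K1 * W1 \<xi> + ennreal K2 * W2 \<xi>"
    proof (cases "\<xi> > 0")
      case True
      have "\<bar>\<phi> \<xi>\<bar> * (1 + \<xi>) * norm (g \<xi>) \<le> \<bar>\<phi> \<xi>\<bar> * (1 + \<xi>) * (K1 * norm (h1 \<xi>) + K2 * norm (h2 \<xi>))"
        by (intro mult_left_mono b True) (use True in auto)
      also have "\<dots> = K1 * (\<bar>\<phi> \<xi>\<bar> * (1 + \<xi>) * norm (h1 \<xi>)) + K2 * (\<bar>\<phi> \<xi>\<bar> * (1 + \<xi>) * norm (h2 \<xi>))"
        by (simp add: algebra_simps)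
      finally show ?thesis using True K1 K2
        by (simp add: W1_def W2_def ennreal_mult[symmetric] ennreal_plus[symmetric] del: ennreal_plus)
    next
      case False then show ?thesis by simp
    qed
  qed
  also have "\<dots> = ennreal K1 * L1_nn \<phi> h1 + ennreal K2 * L1_nn \<phi> h2"
    using W1 W2 by (simp add: nn_integral_add nn_integral_cmult W1_def W2_def L1_nn_def)
  also have "\<dots> = ennreal (K1 * L1norm \<phi> h1 + K2 * L1norm \<phi> h2)"
    using L1nn_fin[OF h1] L1nn_fin[OF h2] K1 K2 L1norm_nonneg[of \<phi> h1] L1norm_nonneg[of \<phi> h2]
    by (simp add: ennreal_mult[symmetric] ennreal_plus[symmetric] del: ennreal_plus)
  finally have *: "L1_nn \<phi> g \<le> ennreal (K1 * L1norm \<phi> h1 + K2 * L1norm \<phi> h2)" .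
  then show "isL1 \<phi> g" using gm le_less_trans[OF * ennreal_less_top] unfolding isL1_def by simp
  show "L1norm \<phi> g \<le> K1 * L1norm \<phi> h1 + K2 * L1norm \<phi> h2"
  proof -
    have "L1norm \<phi> g \<le> enn2real (ennreal (K1 * L1norm \<phi> h1 + K2 * L1norm \<phi> h2))"
      unfolding L1norm_def[of _ g] by (rule enn2real_mono[OF *]) simp
    then show ?thesis using K1 K2 L1norm_nonneg[of \<phi> h1] L1norm_nonneg[of \<phi> h2] by (simp del: ennreal_plus)
  qed
qed



abbreviation SI :: "(real \<Rightarrow> real) \<Rightarrow> (real \<Rightarrow> 'v::{banach,second_countable_topology}) \<Rightarrow> bool" where
  "SI \<phi> f \<equiv> set_integrable lborel {0<..} (\<lambda>\<xi>. \<phi> \<xi> *\<^sub>R f \<xi>)"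

lemma SI_diff: "SI \<phi> f \<Longrightarrow> SI \<phi> g \<Longrightarrow> SI \<phi> (\<lambda>\<xi>. f \<xi> - g \<xi>) \<and> phint \<phi> (\<lambda>\<xi>. f \<xi> - g \<xi>) = phint \<phi> f - phint \<phi> g"
  using set_integral_diff[of lborel "{0<..}" "\<lambda>\<xi>. \<phi> \<xi> *\<^sub>R f \<xi>" "\<lambda>\<xi>. \<phi> \<xi> *\<^sub>R g \<xi>"]
  by (simp add: phint_def scaleR_diff_right)

lemma SI_add: "SI \<phi> f \<Longrightarrow> SI \<phi> g \<Longrightarrow> SI \<phi> (\<lambda>\<xi>. f \<xi> + g \<xi>) \<and> phint \<phi> (\<lambda>\<xi>. f \<xi> + g \<xi>) = phint \<phi> f + phint \<phi> g"
  using set_integral_add[of lborel "{0<..}" "\<lambda>\<xi>. \<phi> \<xi> *\<^sub>R f \<xi>" "\<lambda>\<xi>. \<phi> \<xi> *\<^sub>R g \<xi>"]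
  by (simp add: phint_def scaleR_add_right)

lemma SI_vm:
  fixes x :: "real \<Rightarrow> real^'n" and M :: "real^'k^'n"
  assumes "SI \<phi> x"
  shows "SI \<phi> (\<lambda>\<xi>. x \<xi> v* M) \<and> phint \<phi> (\<lambda>\<xi>. x \<xi> v* M) = phint \<phi> x v* M"
proof -
  have eq: "(\<lambda>\<xi>. indicator {0<..} \<xi> *\<^sub>R (\<phi> \<xi> *\<^sub>R (x \<xi> v* M))) = (\<lambda>\<xi>. (indicator {0<..} \<xi> *\<^sub>R (\<phi> \<xi> *\<^sub>R x \<xi>)) v* M)"
    by (rule ext) (simp add: scaleR_vector_matrix_assoc)
  have i: "integrable lborel (\<lambda>\<xi>. indicator {0<..} \<xi> *\<^sub>R (\<phi> \<xi> *\<^sub>R x \<xi>))"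
    using assms by (simp add: set_integrable_def)
  show ?thesis
    unfolding set_integrable_def phint_def set_lebesgue_integral_def eq
    using integrable_bounded_linear[OF vm_blin i] integral_bounded_linear[OF vm_blin i] by blast
qed

lemma phint_cong: "(\<And>\<xi>. \<xi> > 0 \<Longrightarrow> f \<xi> = g \<xi>) \<Longrightarrow> phint \<phi> f = phint \<phi> g"
  unfolding phint_def by (rule set_lebesgue_integral_cong) auto

lemma exp_bd1: "0 \<le> x \<Longrightarrow> \<bar>exp (- x) - 1\<bar> \<le> (x::real)"
proof -
  assume x: "0 \<le> x"
  have "exp (- x) \<le> 1" using x by simp
  moreover have "1 - x \<le> exp (- x)" using exp_ge_add_one_self[of "-x"] by simp
  ultimately show ?thesis by simp
qed

lemma exp_bd2:
  assumes x: "0 \<le> x" and th: "0 < \<theta>" "\<theta> \<le> 1"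
  shows "\<bar>exp (- x) - 1\<bar> \<le> (x::real) powr \<theta>"
proof (cases "x \<le> 1")
  case True
  have "x = x powr 1" using x by (cases "x = 0") auto
  also have "\<dots> \<le> x powr \<theta>" using True x th by (intro powr_mono') auto
  finally show ?thesis using exp_bd1[OF x] by linarith
next
  case False
  have "\<bar>exp (- x) - 1\<bar> \<le> 1" using x by simp
  also have "1 \<le> x powr \<theta>" using False th by (intro ge_one_powr_ge_zero) auto
  finally show ?thesis .
qed

lemma pow_bd: assumes "0 \<le> (\<xi>::real)" "0 < \<theta>" "\<theta> \<le> 1" shows "\<xi> powr \<theta> \<le> 1 + \<xi>"
proof (cases "\<xi> \<le> 1")
  case True
  have "\<xi> powr \<theta> \<le> 1" using True assms by (intro powr_le1) auto
  then show ?thesis using assms by linarith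
next
  case False
  have "\<xi> powr \<theta> \<le> \<xi> powr 1" using False assms by (intro powr_mono) auto
  then show ?thesis using False by simp
qed

lemma exp_bd3:
  assumes "0 \<le> (\<xi>::real)" "0 \<le> h" "0 < \<theta>" "\<theta> \<le> 1"
  shows "\<bar>exp (- \<xi> * h) - 1\<bar> \<le> h powr \<theta> * (1 + \<xi>)"
proof -
  have "\<bar>exp (- (\<xi> * h)) - 1\<bar> \<le> (\<xi> * h) powr \<theta>" using exp_bd2[of "\<xi> * h" \<theta>] assms by simp
  also have "\<dots> = \<xi> powr \<theta> * h powr \<theta>" using assms by (simp add: powr_mult)
  also have "\<dots> \<le> (1 + \<xi>) * h powr \<theta>" using assms pow_bd[of \<xi> \<theta>] by (intro mult_right_mono) auto
  finally show ?thesis by (simp add: mult.commute)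
qed



lemma td_meas:
  fixes f :: "real \<Rightarrow> real \<Rightarrow> 'v::{banach,second_countable_topology}"
  assumes "isL1 \<phi> (f t)" "isL1 \<phi> (f s)"
  shows "set_borel_measurable lborel {0..} (tdelta1 f t s)"
proof -
  have [measurable]: "(\<lambda>x. indicator {0..} x *\<^sub>R f t x) \<in> borel_measurable lborel"
    "(\<lambda>x. indicator {0..} x *\<^sub>R f s x) \<in> borel_measurable lborel"
    using assms by (auto simp: isL1_def set_borel_measurable_def)
  have "(\<lambda>\<xi>. indicator {0..} \<xi> *\<^sub>R tdelta1 f t s \<xi>) =
        (\<lambda>\<xi>. indicator {0..} \<xi> *\<^sub>R f t \<xi> - exp (- \<xi> * (t - s)) *\<^sub>R (indicator {0..} \<xi> *\<^sub>R f s \<xi>))"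
    by (rule ext) (simp add: tdelta1_def scaleR_diff_right)
  then show ?thesis unfolding set_borel_measurable_def by (simp only:) measurable
qed

lemma isL1_zero: "isL1 \<phi> (\<lambda>\<xi>. 0::'v::real_normed_vector) \<and> L1norm \<phi> (\<lambda>\<xi>. 0::'v) = 0"
  by (simp add: isL1_def L1norm_def L1_nn_def set_borel_measurable_def)

lemma powr_split:
  assumes "0 < (d::real)" "d \<le> T" "\<kappa> \<le> \<gamma>"
  shows "d powr \<gamma> \<le> T powr (\<gamma> - \<kappa>) * d powr \<kappa>"
proof -
  have "d powr \<gamma> = d powr ((\<gamma> - \<kappa>) + \<kappa>)" by simp
  also have "\<dots> = d powr (\<gamma> - \<kappa>) * d powr \<kappa>" using powr_add[of d "\<gamma> - \<kappa>" \<kappa>] by simp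
  also have "\<dots> \<le> T powr (\<gamma> - \<kappa>) * d powr \<kappa>"
    using assms by (intro mult_right_mono powr_mono2) auto
  finally show ?thesis .
qed

lemma quot_le: "0 < d \<Longrightarrow> X \<le> M * d powr k \<Longrightarrow> X / d powr k \<le> (M::real)"
  by (simp add: divide_le_eq)

lemma holder_from:
  fixes z :: "real \<Rightarrow> 'v::real_normed_vector"
  assumes ab: "a < b"
    and bd: "\<And>s t. a \<le> s \<Longrightarrow> s < t \<Longrightarrow> t \<le> b \<Longrightarrow> norm (z t - z s) \<le> M * (t - s) powr \<mu>"
  shows "pholder \<mu> a b z" and "pnorm1 \<mu> a b z \<le> M"
proof -
  have q: "pquot1 \<mu> z p \<le> M" if "p \<in> pairs_ne a b" for p
  proof -
    obtain t s where p: "p = (t, s)" by (cases p)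
    with that have ts: "t \<in> {a..b}" "s \<in> {a..b}" "s \<noteq> t" by (auto simp: pairs_ne_def)
    show ?thesis
    proof (cases "s < t")
      case True
      then show ?thesis using bd[of s t] ts by (auto simp: p pquot1_def intro!: quot_le)
    next
      case False
      then have "t < s" using ts by auto
      then show ?thesis using bd[of t s] ts by (auto simp: p pquot1_def norm_minus_commute intro!: quot_le)
    qed
  qed
  then show "pholder \<mu> a b z" unfolding pholder_def by (intro bdd_aboveI2) 
  have "pairs_ne a b \<noteq> {}" using ab unfolding pairs_ne_def by (intro ex_in_conv[THEN iffD1] exI[of _ "(b,a)"]) auto
  then show "pnorm1 \<mu> a b z \<le> M" unfolding pnorm1_def using q by (intro cSUP_least) auto
qed

lemma pC2_from:
  fixes r :: "real \<Rightarrow> real \<Rightarrow> 'v::real_normed_vector"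
  assumes ab: "a < b"
    and bd: "\<And>s t. a \<le> s \<Longrightarrow> s < t \<Longrightarrow> t \<le> b \<Longrightarrow> norm (r t s) \<le> M * (t - s) powr \<mu>"
  shows "pC2 \<mu> a b r" and "pnorm2 \<mu> a b r \<le> M"
proof -
  have q: "pquot2 \<mu> r p \<le> M" if "p \<in> offdiag2 a b" for p
    using that bd by (auto simp: offdiag2_def pquot2_def intro!: quot_le)
  then show "pC2 \<mu> a b r" unfolding pC2_def by (intro bdd_aboveI2) 
  have "offdiag2 a b \<noteq> {}" using ab by (auto simp: offdiag2_def)
  then show "pnorm2 \<mu> a b r \<le> M" unfolding pnorm2_def using q by (intro cSUP_least) auto
qed

lemma tq2_from:
  fixes B :: "real \<Rightarrow> real \<Rightarrow> real \<Rightarrow> 'v::real_normed_vector"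
  assumes bd: "\<And>s t. a \<le> s \<Longrightarrow> s < t \<Longrightarrow> t \<le> b \<Longrightarrow> L1norm \<phi> (B t s) \<le> M * (t - s) powr \<mu>"
  shows "bdd_above (tquot2 \<phi> \<mu> B ` offdiag2 a b)"
  using bd by (intro bdd_aboveI2[where M=M]) (auto simp: offdiag2_def tquot2_def intro!: quot_le)

lemma tq2_use:
  fixes B :: "real \<Rightarrow> real \<Rightarrow> real \<Rightarrow> 'v::real_normed_vector"
  assumes bd: "bdd_above (tquot2 \<phi> \<mu> B ` offdiag2 a b)" and st: "a \<le> s" "s < t" "t \<le> b"
  shows "L1norm \<phi> (B t s) \<le> tnorm2 \<phi> \<mu> a b B * (t - s) powr \<mu>" and "0 \<le> tnorm2 \<phi> \<mu> a b B"
proof -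
  have m: "(t, s) \<in> offdiag2 a b" using st by (auto simp: offdiag2_def)
  have "tquot2 \<phi> \<mu> B (t, s) \<le> tnorm2 \<phi> \<mu> a b B"
    unfolding tnorm2_def by (rule cSUP_upper[OF m bd])
  then show "L1norm \<phi> (B t s) \<le> tnorm2 \<phi> \<mu> a b B * (t - s) powr \<mu>"
    using st by (simp add: tquot2_def divide_le_eq)
  have "0 \<le> tquot2 \<phi> \<mu> B (t, s)" by (simp add: tquot2_def L1norm_nonneg)
  then show "0 \<le> tnorm2 \<phi> \<mu> a b B" using \<open>tquot2 \<phi> \<mu> B (t, s) \<le> _\<close> by linarith
qed

lemma ph_use:
  fixes z :: "real \<Rightarrow> 'v::real_normed_vector"
  assumes h: "pholder \<mu> a b z" and ab: "a < b" and mu: "0 \<le> \<mu>"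
  shows "0 \<le> pnorm1 \<mu> a b z" and "0 \<le> pnorm0 a b z" and "\<And>s. s \<in> {a..b} \<Longrightarrow> norm (z s) \<le> pnorm0 a b z"
proof -
  obtain H where H: "\<And>p. p \<in> pairs_ne a b \<Longrightarrow> pquot1 \<mu> z p \<le> H"
    using h unfolding pholder_def bdd_above_def by auto
  have m: "(b, a) \<in> pairs_ne a b" using ab by (auto simp: pairs_ne_def)
  have "pquot1 \<mu> z (b, a) \<le> pnorm1 \<mu> a b z"
    unfolding pnorm1_def using h m by (intro cSUP_upper) (auto simp: pholder_def)
  moreover have "0 \<le> pquot1 \<mu> z (b, a)" by (simp add: pquot1_def)
  ultimately show "0 \<le> pnorm1 \<mu> a b z" by linarith
  have H0: "0 \<le> H" using H[OF m] \<open>0 \<le> pquot1 \<mu> z (b, a)\<close> by linarith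
  have zb: "norm (z s) \<le> norm (z a) + H * (b - a) powr \<mu>" if "s \<in> {a..b}" for s
  proof (cases "s = a")
    case True
    then show ?thesis using H0 by simp
  next
    case False
    then have sa: "(s, a) \<in> pairs_ne a b" "a < s" using that by (auto simp: pairs_ne_def)
    have "norm (z s - z a) / (s - a) powr \<mu> \<le> H" using H[OF sa(1)] sa by (simp add: pquot1_def)
    then have "norm (z s - z a) \<le> H * (s - a) powr \<mu>" using sa by (simp add: divide_le_eq)
    also have "\<dots> \<le> H * (b - a) powr \<mu>"
      using that sa H0 mu by (intro mult_left_mono powr_mono2) auto
    finally show ?thesis using norm_triangle_ineq2[of "z s" "z a"] by linarith
  qed
  then have bd: "bdd_above ((\<lambda>s. norm (z s)) ` {a..b})" by (intro bdd_aboveI2) 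
  show "\<And>s. s \<in> {a..b} \<Longrightarrow> norm (z s) \<le> pnorm0 a b z"
    unfolding pnorm0_def using bd by (intro cSUP_upper) auto
  then have "norm (z a) \<le> pnorm0 a b z" using ab by simp
  then show "0 \<le> pnorm0 a b z" using norm_ge_zero[of "z a"] by linarith
qed



lemma fcoef:
  assumes "0 < (\<xi>::real)" "a \<le> s" "s \<le> t"
  shows "\<bar>(exp (- \<xi> * (t - s)) - 1) * exp (- \<xi> * (s - a))\<bar> \<le> (t - s) * (1 + \<xi>)"
proof -
  have "\<bar>(exp (- \<xi> * (t - s)) - 1) * exp (- \<xi> * (s - a))\<bar> = \<bar>exp (- (\<xi> * (t - s))) - 1\<bar> * exp (- (\<xi> * (s - a)))"
    by (simp add: abs_mult)
  also have "\<dots> \<le> (\<xi> * (t - s)) * 1"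
    using exp_bd1[of "\<xi> * (t - s)"] assms by (intro mult_mono) auto
  also have "\<dots> \<le> (t - s) * (1 + \<xi>)" using assms by (simp add: algebra_simps)
  finally show ?thesis .
qed

theorem proposition4p12:
  fixes \<phi> :: "real \<Rightarrow> real" and T \<kappa> \<gamma> :: real
    and x1t :: "real \<Rightarrow> real \<Rightarrow> real \<Rightarrow> real ^ 'n"
    and x2t :: "real \<Rightarrow> real \<Rightarrow> real \<Rightarrow> real ^ 'n ^ 'n"
    and x3t :: "real \<Rightarrow> real \<Rightarrow> real \<Rightarrow> real \<Rightarrow> real ^ 'n ^ 'n"
  assumes "set_borel_measurable lborel {0<..} \<phi>"
    and "T > 0"
    and "1/3 < \<kappa>" and "\<kappa> < \<gamma>" and "\<gamma> < 1/2"
    and "hypH \<phi> \<gamma> T x1t x2t x3t"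
  shows "\<exists>c. \<forall>a b (a0 :: real ^ 'k) (ht :: real \<Rightarrow> real ^ 'k)
              (yt :: real \<Rightarrow> real \<Rightarrow> real ^ 'k) (\<zeta> :: real \<Rightarrow> real ^ 'k ^ 'n)
              (rt :: real \<Rightarrow> real \<Rightarrow> real \<Rightarrow> real ^ 'k).
     0 \<le> a \<and> a < b \<and> b \<le> T \<and> isL1 \<phi> ht \<and> tQ \<phi> \<kappa> x1t a b ht yt \<zeta> rt \<longrightarrow>
     (let y = (\<lambda>t. a0 + phint \<phi> (yt t));
          h = a0 + phint \<phi> ht;
          f = (\<lambda>t s. phint \<phi> (\<lambda>\<xi>. ((exp (- \<xi> * (t - s)) - 1) * exp (- \<xi> * (s - a))) *\<^sub>R ht \<xi>));
          x1 = xint \<phi> x1t;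
          ry = (\<lambda>t s. y t - y s - f t s - x1 t s v* \<zeta> s)
      in inA \<kappa> \<gamma> x1 a b f h y \<zeta> ry \<and>
         Mnorm \<kappa> a b y \<zeta> ry \<le> c * (tQnorm \<phi> \<kappa> a b yt \<zeta> rt + (b - a) powr (1 - \<kappa>) * L1norm \<phi> ht))"
proof -
  have phim: "set_borel_measurable lborel {0<..} \<phi>" by fact
  have T0: "0 < T" and k1: "1/3 < \<kappa>" and kg: "\<kappa> < \<gamma>" and g2: "\<gamma> < 1/2" using assms by auto
  have k0: "0 < \<kappa>" using k1 by simp
  have x1mu: "tC2mu \<phi> \<gamma> 0 T x1t" using assms(6) by (simp add: hypH_def)
  obtain Cx0 where Cx0: "\<And>p. p \<in> offdiag2 0 T \<Longrightarrow> tquot2 \<phi> \<gamma> x1t p \<le> Cx0"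
    using x1mu unfolding tC2mu_def bdd_above_def by auto
  define Cx where "Cx = max Cx0 0"
  have Cx: "0 \<le> Cx" by (simp add: Cx_def)
  have x1L: "isL1 \<phi> (x1t t s)" if "0 \<le> s" "s \<le> t" "t \<le> T" for t s
    using x1mu that unfolding tC2mu_def tC2_def L1_cont_def simplex2_def by auto
  have x1b: "L1norm \<phi> (x1t t s) \<le> Cx * (t - s) powr \<gamma>" if "0 \<le> s" "s < t" "t \<le> T" for t s
  proof -
    have "tquot2 \<phi> \<gamma> x1t (t, s) \<le> Cx0" using Cx0[of "(t,s)"] that by (auto simp: offdiag2_def)
    then have "L1norm \<phi> (x1t t s) / (t - s) powr \<gamma> \<le> Cx" by (simp add: tquot2_def Cx_def)
    then show ?thesis using that by (simp add: divide_le_eq)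
  qed
  define Kd where "Kd = real CARD('k) * real CARD('n)"
  have Kd: "0 \<le> Kd" by (simp add: Kd_def)
  define c where "c = 1 + Kd * Cx * T powr (\<gamma> - \<kappa>) + (1 + T powr \<kappa>) * (1 + T powr \<kappa>)"
  show ?thesis
  proof (rule exI[of _ c], intro allI impI)
    fix a b :: real and a0 :: "real^'k" and ht :: "real \<Rightarrow> real^'k"
      and yt :: "real \<Rightarrow> real \<Rightarrow> real^'k" and \<zeta> :: "real \<Rightarrow> real^'k^'n"
      and rt :: "real \<Rightarrow> real \<Rightarrow> real \<Rightarrow> real^'k"
    assume A: "0 \<le> a \<and> a < b \<and> b \<le> T \<and> isL1 \<phi> ht \<and> tQ \<phi> \<kappa> x1t a b ht yt \<zeta> rt"
    then have a0': "0 \<le> a" and ab: "a < b" and bT: "b \<le> T" and hL: "isL1 \<phi> ht"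
      and Q: "tQ \<phi> \<kappa> x1t a b ht yt \<zeta> rt" by auto
    from Q have yC: "tC1 \<phi> a b yt" and ya: "\<And>\<xi>. \<xi> \<ge> 0 \<Longrightarrow> yt a \<xi> = ht \<xi>"
      and dec: "\<And>t s \<xi>. a \<le> s \<Longrightarrow> s \<le> t \<Longrightarrow> t \<le> b \<Longrightarrow> \<xi> \<ge> 0 \<Longrightarrow>
                 tdelta1 yt t s \<xi> = x1t t s \<xi> v* \<zeta> s + rt t s \<xi>"
      and zh: "pholder \<kappa> a b \<zeta>" and rmu: "tC2mu \<phi> (2*\<kappa>) a b rt"
      unfolding tQ_def simplex2_def by auto
    have yL: "isL1 \<phi> (yt t)" if "a \<le> t" "t \<le> b" for t
      using yC that by (auto simp: tC1_def L1_cont_def)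
    have rL: "isL1 \<phi> (rt t s)" if "a \<le> s" "s \<le> t" "t \<le> b" for t s
      using rmu that by (auto simp: tC2mu_def tC2_def L1_cont_def simplex2_def)
    define P0 where "P0 = pnorm0 a b \<zeta>"
    define P1 where "P1 = pnorm1 \<kappa> a b \<zeta>"
    define Ny where "Ny = tnorm1 \<phi> \<kappa> a b yt"
    define Nr where "Nr = tnorm2 \<phi> (2*\<kappa>) a b rt"
    define Lh where "Lh = L1norm \<phi> ht"
    have Lh: "0 \<le> Lh" by (simp add: Lh_def L1norm_nonneg)
    have P1: "0 \<le> P1" and P0: "0 \<le> P0" and zb: "\<And>s. s \<in> {a..b} \<Longrightarrow> norm (\<zeta> s) \<le> P0"
      using ph_use[OF zh ab] k0 by (auto simp: P0_def P1_def)
    have rbd: "bdd_above (tquot2 \<phi> (2*\<kappa>) rt ` offdiag2 a b)" using rmu by (simp add: tC2mu_def)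
    have rb: "L1norm \<phi> (rt t s) \<le> Nr * (t - s) powr (2*\<kappa>)" if "a \<le> s" "s < t" "t \<le> b" for s t
      using tq2_use(1)[OF rbd that] by (simp add: Nr_def)
    have Nr: "0 \<le> Nr" using tq2_use(2)[OF rbd, of a b] ab by (simp add: Nr_def)
    have tdL: "isL1 \<phi> (tdelta1 yt t s) \<and>
        L1norm \<phi> (tdelta1 yt t s) \<le> (Kd * norm (\<zeta> s)) * L1norm \<phi> (x1t t s) + 1 * L1norm \<phi> (rt t s)"
      if st: "a \<le> s" "s \<le> t" "t \<le> b" for s t
    proof -
      have pw: "norm (tdelta1 yt t s \<xi>) \<le> (Kd * norm (\<zeta> s)) * norm (x1t t s \<xi>) + 1 * norm (rt t s \<xi>)"
        if "\<xi> > 0" for \<xi>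
      proof -
        have "norm (tdelta1 yt t s \<xi>) = norm (x1t t s \<xi> v* \<zeta> s + rt t s \<xi>)" using dec[OF st, of \<xi>] that by simp
        also have "\<dots> \<le> norm (x1t t s \<xi> v* \<zeta> s) + norm (rt t s \<xi>)" by (rule norm_triangle_ineq)
        also have "norm (x1t t s \<xi> v* \<zeta> s) \<le> Kd * norm (\<zeta> s) * norm (x1t t s \<xi>)"
          using vm_norm[of "x1t t s \<xi>" "\<zeta> s"] by (simp add: Kd_def)
        finally show ?thesis by simp
      qed
      have l1: "isL1 \<phi> (x1t t s)" using st a0' bT by (intro x1L) auto
      have l2: "isL1 \<phi> (rt t s)" using st by (intro rL) auto
      have l3: "set_borel_measurable lborel {0..} (tdelta1 yt t s)" using st by (intro td_meas[of \<phi>] yL) auto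
      have k: "0 \<le> Kd * norm (\<zeta> s)" using Kd by simp
      show ?thesis
        using L1_bound2[OF phim l1 l2 l3 k, of 1] pw by auto
    qed
    have tdb: "L1norm \<phi> (tdelta1 yt t s) \<le> (Kd * P0 * Cx * T powr (\<gamma> - \<kappa>) + Nr * T powr \<kappa>) * (t - s) powr \<kappa>"
      if st: "a \<le> s" "s < t" "t \<le> b" for s t
    proof -
      have d: "0 < t - s" "t - s \<le> T" using st a0' bT by auto
      have e1: "L1norm \<phi> (tdelta1 yt t s) \<le> (Kd * norm (\<zeta> s)) * L1norm \<phi> (x1t t s) + 1 * L1norm \<phi> (rt t s)"
        using tdL[of s t] st by auto
      have e2: "(Kd * norm (\<zeta> s)) * L1norm \<phi> (x1t t s) \<le> (Kd * P0) * (Cx * (t - s) powr \<gamma>)"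
        using st zb[of s] Kd P0 x1b[of s t] a0' bT L1norm_nonneg
        by (intro mult_mono mult_left_mono) auto
      have e3: "Cx * (t - s) powr \<gamma> \<le> Cx * (T powr (\<gamma> - \<kappa>) * (t - s) powr \<kappa>)"
        using powr_split[OF d, of \<kappa> \<gamma>] kg Cx by (intro mult_left_mono) auto
      have e3': "(Kd * P0) * (Cx * (t - s) powr \<gamma>) \<le> (Kd * P0) * (Cx * (T powr (\<gamma> - \<kappa>) * (t - s) powr \<kappa>))"
        using e3 Kd P0 by (simp add: mult_left_mono)
      have e4: "1 * L1norm \<phi> (rt t s) \<le> Nr * (T powr (2*\<kappa> - \<kappa>) * (t - s) powr \<kappa>)"
        using rb[OF st] powr_split[OF d, of \<kappa> "2*\<kappa>"] k0 Nr
        by (smt (verit) mult_left_mono)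
      have "L1norm \<phi> (tdelta1 yt t s) \<le> (Kd * P0) * (Cx * (T powr (\<gamma> - \<kappa>) * (t - s) powr \<kappa>)) + Nr * (T powr (2*\<kappa> - \<kappa>) * (t - s) powr \<kappa>)"
        using e1 e2 e3' e4 by linarith
      then show ?thesis by (simp add: algebra_simps)
    qed
    have Nybd: "bdd_above (tquot2 \<phi> \<kappa> (tdelta1 yt) ` offdiag2 a b)"
      by (rule tq2_from) (rule tdb)
    have Ny: "0 \<le> Ny" using tq2_use(2)[OF Nybd, of a b] ab by (simp add: Ny_def tnorm1_def)
    have tda: "isL1 \<phi> (tdelta1 yt s a) \<and> L1norm \<phi> (tdelta1 yt s a) \<le> Ny * T powr \<kappa>"
      if s: "a \<le> s" "s \<le> b" for s
    proof (cases "s = a")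
      case True
      have "tdelta1 yt a a = (\<lambda>\<xi>. 0)" by (rule ext) (simp add: tdelta1_def)
      moreover have "0 \<le> Ny * T powr \<kappa>" using Ny by simp
      ultimately show ?thesis using True isL1_zero[of \<phi>, where 'v="real^'k"] by simp
    next
      case False
      then have "a < s" using s by simp
      have "L1norm \<phi> (tdelta1 yt s a) \<le> Ny * (s - a) powr \<kappa>"
        using tq2_use(1)[OF Nybd, of a s] \<open>a < s\<close> s by (simp add: Ny_def tnorm1_def)
      also have "\<dots> \<le> Ny * T powr \<kappa>" using Ny s a0' bT k0 by (intro mult_left_mono powr_mono2) auto
      finally show ?thesis using tdL[of a s] s by auto
    qed
    define y where "y = (\<lambda>t. a0 + phint \<phi> (yt t))"
    define h where "h = a0 + phint \<phi> ht"
    define f where "f = (\<lambda>t s. phint \<phi> (\<lambda>\<xi>. ((exp (- \<xi> * (t - s)) - 1) * exp (- \<xi> * (s - a))) *\<^sub>R ht \<xi>))"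
    define x1 where "x1 = xint \<phi> x1t"
    define ry where "ry = (\<lambda>t s. y t - y s - f t s - x1 t s v* \<zeta> s)"
    define B where "B = Nr + Ny * T powr \<kappa>"
    have B: "0 \<le> B" using Nr Ny by (simp add: B_def)
    have fb: "norm (f t s) \<le> Lh * (t - s) powr 1" if st: "a \<le> s" "s < t" "t \<le> b" for s t
    proof -
      have "norm (f t s) \<le> (t - s) * Lh"
        unfolding f_def Lh_def
      proof (rule phint_weighted(2)[OF phim hL])
        show "(\<lambda>\<xi>. (exp (- \<xi> * (t - s)) - 1) * exp (- \<xi> * (s - a))) \<in> borel_measurable lborel"
          by measurable
        fix \<xi> :: real assume \<xi>: "\<xi> > 0"
        have "\<bar>(exp (- \<xi> * (t - s)) - 1) * exp (- \<xi> * (s - a))\<bar> = \<bar>exp (- (\<xi> * (t - s))) - 1\<bar> * exp (- (\<xi> * (s - a)))"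
          by (simp add: abs_mult)
        also have "\<dots> \<le> (\<xi> * (t - s)) * 1"
          using exp_bd1[of "\<xi> * (t - s)"] \<xi> st by (intro mult_mono) auto
        also have "\<dots> \<le> (t - s) * (1 + \<xi>)" using st by (simp add: algebra_simps)
        finally show "\<bar>(exp (- \<xi> * (t - s)) - 1) * exp (- \<xi> * (s - a))\<bar> \<le> (t - s) * (1 + \<xi>)" .
      qed
      then show ?thesis using st by (simp add: mult.commute)
    qed
    have ryb: "norm (ry t s) \<le> B * (t - s) powr (2*\<kappa>)" if st: "a \<le> s" "s < t" "t \<le> b" for s t
    proof -
      define F where "F = (\<lambda>\<xi>. ((exp (- \<xi> * (t - s)) - 1) * exp (- \<xi> * (s - a))) *\<^sub>R ht \<xi>)"
      define E where "E = (\<lambda>\<xi>. (exp (- \<xi> * (t - s)) - 1) *\<^sub>R tdelta1 yt s a \<xi>)"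
      have tdaL: "isL1 \<phi> (tdelta1 yt s a)" and tdaB: "L1norm \<phi> (tdelta1 yt s a) \<le> Ny * T powr \<kappa>"
        using tda[of s] st by auto
      have ytL: "isL1 \<phi> (yt t)" "isL1 \<phi> (yt s)" using st by (auto intro!: yL)
      have SIt: "SI \<phi> (yt t)" "SI \<phi> (yt s)" using phint_L1(1)[OF phim ytL(1)] phint_L1(1)[OF phim ytL(2)] by auto
      have cmF: "(\<lambda>\<xi>. (exp (- \<xi> * (t - s)) - 1) * exp (- \<xi> * (s - a))) \<in> borel_measurable lborel"
        by measurable
      have SIF: "SI \<phi> F"
        using phint_weighted(1)[OF phim hL cmF fcoef[of _ a s t]] st unfolding F_def by auto
      have cmE: "(\<lambda>\<xi>. exp (- \<xi> * (t - s)) - 1) \<in> borel_measurable lborel" by measurable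
      have cbE: "\<bar>exp (- \<xi> * (t - s)) - 1\<bar> \<le> (t - s) powr (2*\<kappa>) * (1 + \<xi>)" if "\<xi> > 0" for \<xi>
        using exp_bd3[of \<xi> "t - s" "2*\<kappa>"] that st k0 kg g2 by auto
      have SIE: "SI \<phi> E" and nE: "norm (phint \<phi> E) \<le> (t - s) powr (2*\<kappa>) * L1norm \<phi> (tdelta1 yt s a)"
        using phint_weighted[OF phim tdaL cmE cbE] unfolding E_def by auto
      have x1L': "isL1 \<phi> (x1t t s)" using st a0' bT by (intro x1L) auto
      have SIx: "SI \<phi> (x1t t s)" using phint_L1(1)[OF phim x1L'] .
      have rL': "isL1 \<phi> (rt t s)" using st by (intro rL) auto
      have SIr: "SI \<phi> (rt t s)" using phint_L1(1)[OF phim rL'] .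
      have nr: "norm (phint \<phi> (rt t s)) \<le> L1norm \<phi> (rt t s)" using phint_L1(2)[OF phim rL'] .
      have D1: "SI \<phi> (\<lambda>\<xi>. yt t \<xi> - yt s \<xi>) \<and> phint \<phi> (\<lambda>\<xi>. yt t \<xi> - yt s \<xi>) = phint \<phi> (yt t) - phint \<phi> (yt s)"
        by (rule SI_diff[OF SIt])
      have D2: "SI \<phi> (\<lambda>\<xi>. yt t \<xi> - yt s \<xi> - F \<xi>) \<and> phint \<phi> (\<lambda>\<xi>. yt t \<xi> - yt s \<xi> - F \<xi>) = phint \<phi> (\<lambda>\<xi>. yt t \<xi> - yt s \<xi>) - phint \<phi> F"
        using SI_diff[OF D1[THEN conjunct1] SIF] by simp
      have X: "SI \<phi> (\<lambda>\<xi>. x1t t s \<xi> v* \<zeta> s) \<and> phint \<phi> (\<lambda>\<xi>. x1t t s \<xi> v* \<zeta> s) = phint \<phi> (x1t t s) v* \<zeta> s"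
        by (rule SI_vm[OF SIx])
      have D3: "phint \<phi> (\<lambda>\<xi>. yt t \<xi> - yt s \<xi> - F \<xi> - x1t t s \<xi> v* \<zeta> s) = phint \<phi> (\<lambda>\<xi>. yt t \<xi> - yt s \<xi> - F \<xi>) - phint \<phi> (\<lambda>\<xi>. x1t t s \<xi> v* \<zeta> s)"
        using SI_diff[OF D2[THEN conjunct1] X[THEN conjunct1]] by simp
      have RE: "phint \<phi> (\<lambda>\<xi>. rt t s \<xi> + E \<xi>) = phint \<phi> (rt t s) + phint \<phi> E"
        using SI_add[OF SIr SIE] by simp
      have cong: "phint \<phi> (\<lambda>\<xi>. yt t \<xi> - yt s \<xi> - F \<xi> - x1t t s \<xi> v* \<zeta> s) = phint \<phi> (\<lambda>\<xi>. rt t s \<xi> + E \<xi>)"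
      proof (rule phint_cong)
        fix \<xi> :: real assume \<xi>: "\<xi> > 0"
        have d1: "yt t \<xi> - exp (- \<xi> * (t - s)) *\<^sub>R yt s \<xi> = x1t t s \<xi> v* \<zeta> s + rt t s \<xi>"
          using dec[of s t \<xi>] st \<xi> by (simp add: tdelta1_def)
        have ya\<xi>: "yt a \<xi> = ht \<xi>" using ya \<xi> by simp
        have xx: "x1t t s \<xi> v* \<zeta> s = yt t \<xi> - exp (- \<xi> * (t - s)) *\<^sub>R yt s \<xi> - rt t s \<xi>"
          by (metis d1 add_diff_cancel_right')
        show "yt t \<xi> - yt s \<xi> - F \<xi> - x1t t s \<xi> v* \<zeta> s = rt t s \<xi> + E \<xi>"
          unfolding xx F_def E_def tdelta1_def ya\<xi> by (simp add: algebra_simps)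
      qed
      have "ry t s = phint \<phi> (yt t) - phint \<phi> (yt s) - phint \<phi> F - phint \<phi> (x1t t s) v* \<zeta> s"
        by (simp add: ry_def y_def f_def F_def x1_def xint_def)
      also have "\<dots> = phint \<phi> (rt t s) + phint \<phi> E" using D1 D2 X D3 cong RE by simp
      finally have "norm (ry t s) \<le> norm (phint \<phi> (rt t s)) + norm (phint \<phi> E)"
        using norm_triangle_ineq by simp
      also have "\<dots> \<le> Nr * (t - s) powr (2*\<kappa>) + (t - s) powr (2*\<kappa>) * (Ny * T powr \<kappa>)"
        using nr rb[OF st] nE mult_left_mono[OF tdaB, of "(t - s) powr (2*\<kappa>)"] by simp
      finally show ?thesis by (simp add: B_def algebra_simps)
    qed
    have x1n: "norm (x1 t s v* \<zeta> s) \<le> (Kd * P0 * Cx) * (t - s) powr \<gamma>" if st: "a \<le> s" "s < t" "t \<le> b" for s t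
    proof -
      have x1L': "isL1 \<phi> (x1t t s)" using st a0' bT by (intro x1L) auto
      have "norm (x1 t s) \<le> Cx * (t - s) powr \<gamma>"
        using phint_L1(2)[OF phim x1L'] x1b[of s t] st a0' bT by (simp add: x1_def xint_def)
      moreover have "norm (x1 t s v* \<zeta> s) \<le> Kd * norm (\<zeta> s) * norm (x1 t s)"
        using vm_norm[of "x1 t s" "\<zeta> s"] by (simp add: Kd_def)
      moreover have "Kd * norm (\<zeta> s) \<le> Kd * P0" using zb[of s] st Kd by (intro mult_left_mono) auto
      ultimately have "norm (x1 t s v* \<zeta> s) \<le> (Kd * P0) * (Cx * (t - s) powr \<gamma>)"
        by (smt (verit, best) Kd P0 mult_mono norm_ge_zero mult_nonneg_nonneg)
      then show ?thesis by (simp add: algebra_simps)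
    qed
    have ydiff: "y t - y s = f t s + x1 t s v* \<zeta> s + ry t s" for t s by (simp add: ry_def)
    have yb: "norm (y t - y s) \<le> Lh * (t - s) powr 1 + (Kd * P0 * Cx) * (t - s) powr \<gamma> + B * (t - s) powr (2*\<kappa>)"
      if st: "a \<le> s" "s < t" "t \<le> b" for s t
      unfolding ydiff using fb[OF st] x1n[OF st] ryb[OF st] norm_triangle_ineq
      by (smt (verit) norm_triangle_ineq)
    have pw: "d powr 1 \<le> T powr (1 - \<gamma>) * d powr \<gamma> \<and> d powr (2*\<kappa>) \<le> T powr (2*\<kappa> - \<gamma>) * d powr \<gamma>
       \<and> d powr 1 \<le> (b - a) powr (1 - \<kappa>) * d powr \<kappa> \<and> d powr \<gamma> \<le> T powr (\<gamma> - \<kappa>) * d powr \<kappa>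
       \<and> d powr (2*\<kappa>) \<le> T powr (2*\<kappa> - \<kappa>) * d powr \<kappa>"
      if "0 < d" "d \<le> b - a" for d
    proof -
      have dT: "d \<le> T" using that a0' bT by simp
      show ?thesis using powr_split[OF that(1) dT, of \<gamma> 1] powr_split[OF that(1) dT, of \<gamma> "2*\<kappa>"]
          powr_split[OF that, of \<kappa> 1] powr_split[OF that(1) dT, of \<kappa> \<gamma>] powr_split[OF that(1) dT, of \<kappa> "2*\<kappa>"]
          k1 kg g2 by auto
    qed
    define M1 where "M1 = Lh * T powr (1 - \<gamma>) + Kd * P0 * Cx + B * T powr (2*\<kappa> - \<gamma>)"
    define M2 where "M2 = Lh * (b - a) powr (1 - \<kappa>) + Kd * P0 * Cx * T powr (\<gamma> - \<kappa>) + B * T powr \<kappa>"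
    have KPC: "0 \<le> Kd * P0 * Cx" using Kd P0 Cx by simp
    have yg: "norm (y t - y s) \<le> M1 * (t - s) powr \<gamma>" if st: "a \<le> s" "s < t" "t \<le> b" for s t
    proof -
      have d: "0 < t - s" "t - s \<le> b - a" using st by auto
      note p = pw[OF d]
      have "Lh * (t - s) powr 1 \<le> Lh * (T powr (1 - \<gamma>) * (t - s) powr \<gamma>)" using p Lh by (intro mult_left_mono) auto
      moreover have "B * (t - s) powr (2*\<kappa>) \<le> B * (T powr (2*\<kappa> - \<gamma>) * (t - s) powr \<gamma>)" using p B by (intro mult_left_mono) auto
      ultimately show ?thesis using yb[OF st] by (simp add: M1_def algebra_simps)
    qed
    have yk: "norm (y t - y s) \<le> M2 * (t - s) powr \<kappa>" if st: "a \<le> s" "s < t" "t \<le> b" for s t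
    proof -
      have d: "0 < t - s" "t - s \<le> b - a" using st by auto
      note p = pw[OF d]
      have "Lh * (t - s) powr 1 \<le> Lh * ((b - a) powr (1 - \<kappa>) * (t - s) powr \<kappa>)" using p Lh by (intro mult_left_mono) auto
      moreover have "(Kd * P0 * Cx) * (t - s) powr \<gamma> \<le> (Kd * P0 * Cx) * (T powr (\<gamma> - \<kappa>) * (t - s) powr \<kappa>)" using p KPC by (intro mult_left_mono) auto
      moreover have "B * (t - s) powr (2*\<kappa>) \<le> B * (T powr (2*\<kappa> - \<kappa>) * (t - s) powr \<kappa>)" using p B by (intro mult_left_mono) auto
      ultimately show ?thesis using yb[OF st] by (simp add: M2_def algebra_simps)
    qed
    have inA: "inA \<kappa> \<gamma> x1 a b f h y \<zeta> ry"
      unfolding inA_def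
    proof (intro conjI)
      show "pC2 1 a b f" using pC2_from(1)[OF ab fb] .
      show "pholder \<gamma> a b y" using holder_from(1)[OF ab yg] .
      show "y a = h" unfolding y_def h_def using ya by (auto intro!: phint_cong)
      show "\<forall>(t, s)\<in>simplex2 a b. y t - y s - f t s = x1 t s v* \<zeta> s + ry t s"
        by (auto simp: ry_def)
      show "pholder \<kappa> a b \<zeta>" by fact
      show "pC2 (2 * \<kappa>) a b ry" using pC2_from(1)[OF ab ryb] .
    qed
    have Mb: "Mnorm \<kappa> a b y \<zeta> ry \<le> P0 + P1 + B + M2"
      unfolding Mnorm_def P0_def[symmetric] P1_def[symmetric]
      using pC2_from(2)[OF ab ryb] holder_from(2)[OF ab yk] by simp
    define u where "u = T powr \<kappa>"
    define v where "v = Kd * Cx * T powr (\<gamma> - \<kappa>)"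
    define w where "w = (b - a) powr (1 - \<kappa>) * Lh"
    have u: "0 \<le> u" and v: "0 \<le> v" and w: "0 \<le> w" using Kd Cx Lh by (auto simp: u_def v_def w_def)
    have cdef: "c = 1 + v + (1 + u) * (1 + u)" by (simp add: c_def u_def v_def)
    have tQ: "tQnorm \<phi> \<kappa> a b yt \<zeta> rt = Ny + P0 + P1 + Nr"
      by (simp add: tQnorm_def Ny_def P0_def P1_def Nr_def)
    have rhs: "P0 + P1 + B + M2 = (1 + v) * P0 + P1 + (1 + u) * Nr + (u * (1 + u)) * Ny + w"
      by (simp add: M2_def B_def u_def v_def w_def algebra_simps)
    have "(1 + v) * P0 + P1 + (1 + u) * Nr + (u * (1 + u)) * Ny + w \<le> c * P0 + c * P1 + c * Nr + c * Ny + c * w"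
    proof -
      have "(1 + v) * P0 \<le> c * P0" using P0 u by (intro mult_right_mono) (auto simp: cdef)
      moreover have "1 * P1 \<le> c * P1" using P1 u v by (intro mult_right_mono) (auto simp: cdef)
      moreover have "(1 + u) * Nr \<le> c * Nr" using Nr u v by (intro mult_right_mono) (auto simp: cdef algebra_simps)
      moreover have "(u * (1 + u)) * Ny \<le> c * Ny" using Ny u v by (intro mult_right_mono) (auto simp: cdef algebra_simps)
      moreover have "1 * w \<le> c * w" using w u v by (intro mult_right_mono) (auto simp: cdef)
      ultimately show ?thesis by linarith
    qed
    also have "\<dots> = c * (tQnorm \<phi> \<kappa> a b yt \<zeta> rt + (b - a) powr (1 - \<kappa>) * L1norm \<phi> ht)"
      unfolding tQ by (simp add: w_def Lh_def algebra_simps)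
    finally have Mc: "Mnorm \<kappa> a b y \<zeta> ry \<le> c * (tQnorm \<phi> \<kappa> a b yt \<zeta> rt + (b - a) powr (1 - \<kappa>) * L1norm \<phi> ht)"
      using Mb rhs by linarith
    show "let y = (\<lambda>t. a0 + phint \<phi> (yt t));
          h = a0 + phint \<phi> ht;
          f = (\<lambda>t s. phint \<phi> (\<lambda>\<xi>. ((exp (- \<xi> * (t - s)) - 1) * exp (- \<xi> * (s - a))) *\<^sub>R ht \<xi>));
          x1 = xint \<phi> x1t;
          ry = (\<lambda>t s. y t - y s - f t s - x1 t s v* \<zeta> s)
      in inA \<kappa> \<gamma> x1 a b f h y \<zeta> ry \<and>
         Mnorm \<kappa> a b y \<zeta> ry \<le> c * (tQnorm \<phi> \<kappa> a b yt \<zeta> rt + (b - a) powr (1 - \<kappa>) * L1norm \<phi> ht)"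
      using inA Mc unfolding Let_def y_def h_def f_def x1_def ry_def by simp
  qed
qed

end
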